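(* Consider the publishing problem with constant publishing cost, i.e. $\alpha=0$ so that $C^{(p)}_t(N)=\beta\,\mathbb{1}[N\neq\emptyset]$ for some $\beta\ge 0$ (delay costs arbitrary non-negative, price dynamics $R$ arbitrary). Then there exists an optimal policy $\pi^*$ which at every step publishes either all available transactions or none of them, i.e. for every $t$, either $N^{\pi^*}_t=Q^{\pi^*}_t$ or $N^{\pi^*}_t=\emptyset$.
   Context: The publishing problem is the following infinite-horizon Markov decision process in discrete time $t=0,1,2,\dots$. At each time step $t$ a new transaction $H_t$ is created (transactions are indexed by their creation time). The state at time $t$ is $(t,P_t,Q_t)$, where $P_t\ge 0$ is the current gas price and $Q_t$ is the set of unpublished transactions (with $Q_0=\emptyset$). A policy $\pi$ chooses a subset $N^\pi_t=\pi(t,Q_t,P_t)\subseteq Q_t$ to publish, incurring cost $C_t(P_t,Q_t,N^\pi_t)=P_t\,C^{(p)}_t(N^\pi_t)+C^{(d)}_t(Q_t\setminus N^\pi_t)$. The state then updates by $Q_{t+1}=(Q_t\setminus N^\pi_t)\cup\{H_t\}$ and $P_{t+1}=R(P_t)$, where $R$ is a random function (Markov transition) on prices whose distribution is known. The publishing cost is $C^{(p)}_t(N)=\alpha|N|+\beta\,\mathbb{1}[N\neq\emptyset]$ with $\alpha,\beta\ge0$. The delay cost is $C^{(d)}_t(N)=\sum_{H_\tau\in N}C^{(d)}_{H_\tau}(t-\tau)$, where each $C^{(d)}_{H_\tau}$ is a non-negative function of the waiting time. The expected total cost of $\pi$ is $C(\pi)=\mathbb{E}\left[\sum_t\gamma^t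 C_t(P_t,Q^\pi_t,N^\pi_t)\right]$ with discount factor $0<\gamma<1$, and $\pi^*$ is optimal if $C(\pi^* )=\min_\pi C(\pi)$. *)

theory Defs
  imports "HOL-Probability.Probability"
begin

text \<open>Transactions are identified with their creation time: transaction H_tau is the natural
number tau.  A (deterministic Markov) policy is a
map pi t Q p giving the set of transactions published at time t in queue Q at gas price p.\<close>

type_synonym policy = "nat \<Rightarrow> nat set \<Rightarrow> real \<Rightarrow> nat set"

definition pub_cost :: "real \<Rightarrow> real \<Rightarrow> nat set \<Rightarrow> real" where
  "pub_cost \<alpha> \<beta> N = \<alpha> * real (card N) + \<beta> * (if N \<noteq> {} then 1 else 0)"

text \<open>Delay cost C^(d)_t(N) = sum over H_tau in N of C^(d)_{H_tau}(t - tau);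
  d tau w is the delay cost of transaction H_tau after waiting w steps.\<close>
definition delay_cost :: "(nat \<Rightarrow> nat \<Rightarrow> real) \<Rightarrow> nat \<Rightarrow> nat set \<Rightarrow> real" where
  "delay_cost d t N = (\<Sum>\<tau>\<in>N. d \<tau> (t - \<tau>))"

definition stage_cost ::
  "real \<Rightarrow> real \<Rightarrow> (nat \<Rightarrow> nat \<Rightarrow> real) \<Rightarrow> nat \<Rightarrow> real \<Rightarrow> nat set \<Rightarrow> nat set \<Rightarrow> real" where
  "stage_cost \<alpha> \<beta> d t p Q N = p * pub_cost \<alpha> \<beta> N + delay_cost d t (Q - N)"

definition admissible :: "policy \<Rightarrow> bool" where
  "admissible \<pi> \<longleftrightarrow>
     (\<forall>t Q p. \<pi> t Q p \<subseteq> Q) \<and>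
     (\<forall>t Q. finite Q \<longrightarrow> (\<lambda>p. \<pi> t Q p) \<in> borel \<rightarrow>\<^sub>M count_space UNIV)"

text \<open>Expected discounted cost of the first n steps, starting at time t in state (t, p, Q),
  where the price evolves by the Markov kernel K (P_{t+1} ~ K P_t):
  the expectation of sum_{s<n} gamma^s C_{t+s}, written via iterated integrals.\<close>
fun horizon_cost ::
  "(real \<Rightarrow> real measure) \<Rightarrow> real \<Rightarrow> real \<Rightarrow> real \<Rightarrow> (nat \<Rightarrow> nat \<Rightarrow> real) \<Rightarrow> policy
     \<Rightarrow> nat \<Rightarrow> nat \<Rightarrow> real \<Rightarrow> nat set \<Rightarrow> ennreal" where
  "horizon_cost K \<gamma> \<alpha> \<beta> d \<pi> 0 t p Q = 0"
| "horizon_cost K \<gamma> \<alpha> \<beta> d \<pi> (Suc n) t p Q =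
     ennreal (stage_cost \<alpha> \<beta> d t p Q (\<pi> t Q p))
     + ennreal \<gamma> * (\<integral>\<^sup>+ p'. horizon_cost K \<gamma> \<alpha> \<beta> d \<pi> n (Suc t) p' ((Q - \<pi> t Q p) \<union> {t}) \<partial>K p)"

text \<open>Expected total discounted cost C(pi) = E[sum_t gamma^t C_t] from initial price p0 and
  Q_0 = {} (monotone limit of the finite-horizon expected costs; costs are non-negative).\<close>
definition total_cost ::
  "(real \<Rightarrow> real measure) \<Rightarrow> real \<Rightarrow> real \<Rightarrow> real \<Rightarrow> (nat \<Rightarrow> nat \<Rightarrow> real) \<Rightarrow> real
     \<Rightarrow> policy \<Rightarrow> ennreal" where
  "total_cost K \<gamma> \<alpha> \<beta> d p0 \<pi> = (SUP n. horizon_cost K \<gamma> \<alpha> \<beta> d \<pi> n 0 p0 {})"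

definition optimal ::
  "(real \<Rightarrow> real measure) \<Rightarrow> real \<Rightarrow> real \<Rightarrow> real \<Rightarrow> (nat \<Rightarrow> nat \<Rightarrow> real) \<Rightarrow> real
     \<Rightarrow> policy \<Rightarrow> bool" where
  "optimal K \<gamma> \<alpha> \<beta> d p0 \<pi> \<longleftrightarrow> admissible \<pi> \<and>
     (\<forall>\<sigma>. admissible \<sigma> \<longrightarrow> total_cost K \<gamma> \<alpha> \<beta> d p0 \<pi> \<le> total_cost K \<gamma> \<alpha> \<beta> d p0 \<sigma>)"

end

theory Submission
  imports Defs
begin

fun VV :: "(real \<Rightarrow> real measure) \<Rightarrow> real \<Rightarrow> real \<Rightarrow> (nat \<Rightarrow> nat \<Rightarrow> real)
   \<Rightarrow> nat \<Rightarrow> nat \<Rightarrow> real \<Rightarrow> nat set \<Rightarrow> ennreal" where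
  "VV K \<gamma> \<beta> d 0 t p Q = 0"
| "VV K \<gamma> \<beta> d (Suc n) t p Q =
    min (ennreal (stage_cost 0 \<beta> d t p Q Q) + ennreal \<gamma> * (\<integral>\<^sup>+ p'. VV K \<gamma> \<beta> d n (Suc t) p' {t} \<partial>K p))
        (ennreal (stage_cost 0 \<beta> d t p Q {}) + ennreal \<gamma> * (\<integral>\<^sup>+ p'. VV K \<gamma> \<beta> d n (Suc t) p' (Q \<union> {t}) \<partial>K p))"

definition Vinf where
  "Vinf K \<gamma> \<beta> d t p Q = (SUP n. VV K \<gamma> \<beta> d n t p Q)"

definition pol :: "(real \<Rightarrow> real measure) \<Rightarrow> real \<Rightarrow> real \<Rightarrow> (nat \<Rightarrow> nat \<Rightarrow> real) \<Rightarrow> policy" where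
  "pol K \<gamma> \<beta> d t Q p =
    (if ennreal (stage_cost 0 \<beta> d t p Q Q) + ennreal \<gamma> * (\<integral>\<^sup>+ p'. Vinf K \<gamma> \<beta> d (Suc t) p' {t} \<partial>K p)
      \<le> ennreal (stage_cost 0 \<beta> d t p Q {}) + ennreal \<gamma> * (\<integral>\<^sup>+ p'. Vinf K \<gamma> \<beta> d (Suc t) p' (Q \<union> {t}) \<partial>K p)
     then Q else {})"

lemma stage_meas[measurable]: "(\<lambda>p. ennreal (stage_cost 0 \<beta> d t p Q N)) \<in> borel_measurable borel"
  unfolding stage_cost_def by measurable

lemma int_meas:
  assumes K: "K \<in> borel \<rightarrow>\<^sub>M prob_algebra borel" and f: "f \<in> borel_measurable borel"
  shows "(\<lambda>p. \<integral>\<^sup>+ p'. f p' \<partial>K p) \<in> borel_measurable borel"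
proof -
  have "(\<lambda>M. integral\<^sup>N M f) \<in> borel_measurable (subprob_algebra borel)"
    using f by (rule nn_integral_measurable_subprob_algebra)
  from measurable_comp[OF measurable_prob_algebraD[OF K] this] show ?thesis by (simp add: o_def)
qed

lemma VV_meas:
  assumes K: "K \<in> borel \<rightarrow>\<^sub>M prob_algebra borel"
  shows "(\<lambda>p. VV K \<gamma> \<beta> d n t p Q) \<in> borel_measurable borel"
proof (induction n arbitrary: t Q)
  case 0 then show ?case by simp
next
  case (Suc n)
  have "(\<lambda>p. \<integral>\<^sup>+ p'. VV K \<gamma> \<beta> d n (Suc t) p' {t} \<partial>K p) \<in> borel_measurable borel"
    by (rule int_meas[OF K Suc.IH])
  moreover have "(\<lambda>p. \<integral>\<^sup>+ p'. VV K \<gamma> \<beta> d n (Suc t) p' (Q \<union> {t}) \<partial>K p) \<in> borel_measurable borel"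
    by (rule int_meas[OF K Suc.IH])
  ultimately show ?case by simp
qed

lemma Vinf_meas:
  assumes K: "K \<in> borel \<rightarrow>\<^sub>M prob_algebra borel"
  shows "(\<lambda>p. Vinf K \<gamma> \<beta> d t p Q) \<in> borel_measurable borel"
  unfolding Vinf_def using VV_meas[OF K] by measurable

lemma pol_adm:
  assumes K: "K \<in> borel \<rightarrow>\<^sub>M prob_algebra borel"
  shows "admissible (pol K \<gamma> \<beta> d)"
  unfolding admissible_def
proof (intro conjI allI impI)
  fix t Q p show "pol K \<gamma> \<beta> d t Q p \<subseteq> Q" by (simp add: pol_def)
next
  fix t and Q :: "nat set"
  have m1: "(\<lambda>p. \<integral>\<^sup>+ p'. Vinf K \<gamma> \<beta> d (Suc t) p' {t} \<partial>K p) \<in> borel_measurable borel"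
    by (rule int_meas[OF K Vinf_meas[OF K]])
  have m2: "(\<lambda>p. \<integral>\<^sup>+ p'. Vinf K \<gamma> \<beta> d (Suc t) p' (Q \<union> {t}) \<partial>K p) \<in> borel_measurable borel"
    by (rule int_meas[OF K Vinf_meas[OF K]])
  show "(\<lambda>p. pol K \<gamma> \<beta> d t Q p) \<in> borel \<rightarrow>\<^sub>M count_space UNIV"
    unfolding pol_def
    by (rule measurable_If) (use m1 m2 in measurable)
qed


lemma VV_inc: "VV K \<gamma> \<beta> d n t p Q \<le> VV K \<gamma> \<beta> d (Suc n) t p Q"
proof (induction n arbitrary: t p Q)
  case 0 then show ?case by simp
next
  case (Suc n)
  have i1: "(\<integral>\<^sup>+ p'. VV K \<gamma> \<beta> d n (Suc t) p' {t} \<partial>K p) \<le> (\<integral>\<^sup>+ p'. VV K \<gamma> \<beta> d (Suc n) (Suc t) p' {t} \<partial>K p)"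
    by (rule nn_integral_mono) (rule Suc.IH)
  have i2: "(\<integral>\<^sup>+ p'. VV K \<gamma> \<beta> d n (Suc t) p' (Q \<union> {t}) \<partial>K p) \<le> (\<integral>\<^sup>+ p'. VV K \<gamma> \<beta> d (Suc n) (Suc t) p' (Q \<union> {t}) \<partial>K p)"
    by (rule nn_integral_mono) (rule Suc.IH)
  show ?case
    unfolding VV.simps(2)[of K \<gamma> \<beta> d n t p Q] VV.simps(2)[of K \<gamma> \<beta> d "Suc n" t p Q]
    using add_left_mono[OF mult_left_mono[OF i1, of "ennreal \<gamma>"], of "ennreal (stage_cost 0 \<beta> d t p Q Q)"]
      add_left_mono[OF mult_left_mono[OF i2, of "ennreal \<gamma>"], of "ennreal (stage_cost 0 \<beta> d t p Q {})"]
    by (intro min.mono) auto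
qed

lemma VV_incseq: "incseq (\<lambda>n. VV K \<gamma> \<beta> d n t p Q)"
  by (rule incseq_SucI) (rule VV_inc)

lemma delay_mono:
  assumes "\<And>\<tau> w. d \<tau> w \<ge> 0" "finite Q" "Q' \<subseteq> Q"
  shows "delay_cost d t Q' \<le> delay_cost d t Q"
  unfolding delay_cost_def using assms by (intro sum_mono2) auto

lemma delay_nonneg: assumes "\<And>\<tau> w. d \<tau> w \<ge> 0" shows "delay_cost d t Q \<ge> 0"
  unfolding delay_cost_def using assms by (intro sum_nonneg) auto

lemma VV_monoQ:
  assumes np: "\<And>p. p \<ge> 0 \<Longrightarrow> AE p' in K p. p' \<ge> 0"
    and dn: "\<And>\<tau> w. d \<tau> w \<ge> 0" and beta: "\<beta> \<ge> 0"
  shows "finite Q \<Longrightarrow> Q' \<subseteq> Q \<Longrightarrow> p \<ge> 0 \<Longrightarrow> VV K \<gamma> \<beta> d n t p Q' \<le> VV K \<gamma> \<beta> d n t p Q"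
proof (induction n arbitrary: t p Q Q')
  case 0 then show ?case by simp
next
  case (Suc n)
  have s1: "stage_cost 0 \<beta> d t p Q' Q' \<le> stage_cost 0 \<beta> d t p Q Q"
    using Suc.prems beta by (auto simp: stage_cost_def pub_cost_def delay_cost_def)
  have s2: "stage_cost 0 \<beta> d t p Q' {} \<le> stage_cost 0 \<beta> d t p Q {}"
    using Suc.prems delay_mono[OF dn] by (auto simp: stage_cost_def pub_cost_def)
  have i2: "(\<integral>\<^sup>+ p'. VV K \<gamma> \<beta> d n (Suc t) p' (Q' \<union> {t}) \<partial>K p) \<le> (\<integral>\<^sup>+ p'. VV K \<gamma> \<beta> d n (Suc t) p' (Q \<union> {t}) \<partial>K p)"
    apply (rule nn_integral_mono_AE)
    using np[OF Suc.prems(3)] by eventually_elim (use Suc.IH[where Q="insert t Q" and Q'="insert t Q'"] Suc.prems in auto)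
  show ?case
    unfolding VV.simps(2)[of K \<gamma> \<beta> d n t p Q] VV.simps(2)[of K \<gamma> \<beta> d n t p Q']
    using add_mono[OF ennreal_leI[OF s1] order_refl, of "ennreal \<gamma> * (\<integral>\<^sup>+ p'. VV K \<gamma> \<beta> d n (Suc t) p' {t} \<partial>K p)"]
      add_mono[OF ennreal_leI[OF s2] mult_left_mono[OF i2, of "ennreal \<gamma>"]]
    by (intro min.mono) auto
qed

lemma VV_lower:
  assumes np: "\<And>p. p \<ge> 0 \<Longrightarrow> AE p' in K p. p' \<ge> 0"
    and dn: "\<And>\<tau> w. d \<tau> w \<ge> 0" and beta: "\<beta> \<ge> 0" and adm: "admissible \<sigma>"
  shows "finite Q \<Longrightarrow> p \<ge> 0 \<Longrightarrow> VV K \<gamma> \<beta> d n t p Q \<le> horizon_cost K \<gamma> 0 \<beta> d \<sigma> n t p Q"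
proof (induction n arbitrary: t p Q)
  case 0 then show ?case by simp
next
  case (Suc n)
  define N where "N = \<sigma> t Q p"
  have NQ: "N \<subseteq> Q" using adm by (auto simp: admissible_def N_def)
  have i: "(\<integral>\<^sup>+ p'. VV K \<gamma> \<beta> d n (Suc t) p' ((Q - N) \<union> {t}) \<partial>K p) \<le> (\<integral>\<^sup>+ p'. horizon_cost K \<gamma> 0 \<beta> d \<sigma> n (Suc t) p' ((Q - N) \<union> {t}) \<partial>K p)"
    apply (rule nn_integral_mono_AE)
    using np[OF Suc.prems(2)] by eventually_elim (use Suc in auto)
  have h: "horizon_cost K \<gamma> 0 \<beta> d \<sigma> (Suc n) t p Q = ennreal (stage_cost 0 \<beta> d t p Q N) + ennreal \<gamma> * (\<integral>\<^sup>+ p'. horizon_cost K \<gamma> 0 \<beta> d \<sigma> n (Suc t) p' ((Q - N) \<union> {t}) \<partial>K p)"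
    by (simp add: N_def)
  have key: "VV K \<gamma> \<beta> d (Suc n) t p Q \<le> ennreal (stage_cost 0 \<beta> d t p Q N) + ennreal \<gamma> * (\<integral>\<^sup>+ p'. VV K \<gamma> \<beta> d n (Suc t) p' ((Q - N) \<union> {t}) \<partial>K p)"
  proof (cases "N = {}")
    case True then show ?thesis by (simp add: min_le_iff_disj)
  next
    case False
    have s: "stage_cost 0 \<beta> d t p Q Q \<le> stage_cost 0 \<beta> d t p Q N"
      using False NQ Suc.prems beta delay_nonneg[where d=d and t=t and Q="Q-N", OF dn] by (simp add: stage_cost_def pub_cost_def delay_cost_def)
    have j: "(\<integral>\<^sup>+ p'. VV K \<gamma> \<beta> d n (Suc t) p' {t} \<partial>K p) \<le> (\<integral>\<^sup>+ p'. VV K \<gamma> \<beta> d n (Suc t) p' ((Q - N) \<union> {t}) \<partial>K p)"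
      apply (rule nn_integral_mono_AE)
      using np[OF Suc.prems(2)] by eventually_elim (rule VV_monoQ[OF np dn beta], use Suc.prems in auto)
    show ?thesis
      using add_mono[OF ennreal_leI[OF s] mult_left_mono[OF j, of "ennreal \<gamma>"]]
      by (simp add: min_le_iff_disj)
  qed
  show ?case unfolding h
    using key add_left_mono[OF mult_left_mono[OF i zero_le, of "ennreal \<gamma>"], of "ennreal (stage_cost 0 \<beta> d t p Q N)"]
    by (rule order_trans)
qed


lemma sup_min:
  fixes A B :: "nat \<Rightarrow> ennreal"
  assumes A: "incseq A" and B: "incseq B"
  shows "min (SUP n. A n) (SUP n. B n) \<le> (SUP n. min (A n) (B n))"
proof (rule dense_le)
  fix x assume x: "x < min (SUP n. A n) (SUP n. B n)"
  then obtain i where i: "x < A i" by (auto simp: less_SUP_iff)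
  from x obtain j where j: "x < B j" by (auto simp: less_SUP_iff)
  have "x < A (max i j)" using i A by (meson max.cobounded1 incseq_def order_less_le_trans)
  moreover have "x < B (max i j)" using j B by (meson max.cobounded2 incseq_def order_less_le_trans)
  ultimately have "x \<le> min (A (max i j)) (B (max i j))" by (auto intro: less_imp_le)
  also have "\<dots> \<le> (SUP n. min (A n) (B n))" by (rule SUP_upper) auto
  finally show "x \<le> (SUP n. min (A n) (B n))" .
qed

lemma int_SUP:
  assumes K: "K \<in> borel \<rightarrow>\<^sub>M prob_algebra borel"
  shows "c + ennreal \<gamma> * (\<integral>\<^sup>+ p'. Vinf K \<gamma> \<beta> d t p' Q \<partial>K p)
     = (SUP n. c + ennreal \<gamma> * (\<integral>\<^sup>+ p'. VV K \<gamma> \<beta> d n t p' Q \<partial>K p))"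
proof -
  have sK: "sets (K p) = sets borel"
    by (rule subprob_measurableD(2)[OF measurable_prob_algebraD[OF K]]) simp
  have "(\<integral>\<^sup>+ p'. Vinf K \<gamma> \<beta> d t p' Q \<partial>K p) = (SUP n. \<integral>\<^sup>+ p'. VV K \<gamma> \<beta> d n t p' Q \<partial>K p)"
    unfolding Vinf_def
  proof (rule nn_integral_monotone_convergence_SUP)
    show "incseq (\<lambda>n p'. VV K \<gamma> \<beta> d n t p' Q)"
      by (rule incseq_SucI, rule le_funI, rule VV_inc)
    fix i show "(\<lambda>p'. VV K \<gamma> \<beta> d i t p' Q) \<in> borel_measurable (K p)"
      using VV_meas[OF K] measurable_cong_sets[OF sK refl] by blast
  qed
  then have "c + ennreal \<gamma> * (\<integral>\<^sup>+ p'. Vinf K \<gamma> \<beta> d t p' Q \<partial>K p)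
     = c + (SUP n. ennreal \<gamma> * (\<integral>\<^sup>+ p'. VV K \<gamma> \<beta> d n t p' Q \<partial>K p))"
    by (simp only: SUP_mult_left_ennreal)
  also have "\<dots> = (SUP n. c + ennreal \<gamma> * (\<integral>\<^sup>+ p'. VV K \<gamma> \<beta> d n t p' Q \<partial>K p))"
    by (rule ennreal_SUP_add_right) simp
  finally show ?thesis .
qed

lemma bellman:
  assumes K: "K \<in> borel \<rightarrow>\<^sub>M prob_algebra borel"
  shows "min (ennreal (stage_cost 0 \<beta> d t p Q Q) + ennreal \<gamma> * (\<integral>\<^sup>+ p'. Vinf K \<gamma> \<beta> d (Suc t) p' {t} \<partial>K p))
        (ennreal (stage_cost 0 \<beta> d t p Q {}) + ennreal \<gamma> * (\<integral>\<^sup>+ p'. Vinf K \<gamma> \<beta> d (Suc t) p' (Q \<union> {t}) \<partial>K p))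
     \<le> Vinf K \<gamma> \<beta> d t p Q"
proof -
  let ?A = "\<lambda>n. ennreal (stage_cost 0 \<beta> d t p Q Q) + ennreal \<gamma> * (\<integral>\<^sup>+ p'. VV K \<gamma> \<beta> d n (Suc t) p' {t} \<partial>K p)"
  let ?B = "\<lambda>n. ennreal (stage_cost 0 \<beta> d t p Q {}) + ennreal \<gamma> * (\<integral>\<^sup>+ p'. VV K \<gamma> \<beta> d n (Suc t) p' (Q \<union> {t}) \<partial>K p)"
  have iA: "incseq ?A"
    by (rule incseq_SucI, intro add_left_mono mult_left_mono nn_integral_mono VV_inc) auto
  have iB: "incseq ?B"
    by (rule incseq_SucI, intro add_left_mono mult_left_mono nn_integral_mono VV_inc) auto
  have "min (SUP n. ?A n) (SUP n. ?B n) \<le> (SUP n. min (?A n) (?B n))" by (rule sup_min[OF iA iB])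
  also have "\<dots> \<le> Vinf K \<gamma> \<beta> d t p Q"
    unfolding Vinf_def
  proof (rule SUP_least)
    fix n
    have "min (?A n) (?B n) = VV K \<gamma> \<beta> d (Suc n) t p Q" by simp
    also have "\<dots> \<le> (SUP n. VV K \<gamma> \<beta> d n t p Q)" by (rule SUP_upper) auto
    finally show "min (?A n) (?B n) \<le> (SUP n. VV K \<gamma> \<beta> d n t p Q)" .
  qed
  finally have fin: "min (SUP n. ?A n) (SUP n. ?B n) \<le> Vinf K \<gamma> \<beta> d t p Q" .
  have eA: "ennreal (stage_cost 0 \<beta> d t p Q Q) + ennreal \<gamma> * (\<integral>\<^sup>+ p'. Vinf K \<gamma> \<beta> d (Suc t) p' {t} \<partial>K p) = (SUP n. ?A n)"
    by (rule int_SUP[OF K])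
  have eB: "ennreal (stage_cost 0 \<beta> d t p Q {}) + ennreal \<gamma> * (\<integral>\<^sup>+ p'. Vinf K \<gamma> \<beta> d (Suc t) p' (Q \<union> {t}) \<partial>K p) = (SUP n. ?B n)"
    by (rule int_SUP[OF K])
  show ?thesis unfolding eA eB by (rule fin)
qed

lemma pol_upper:
  assumes K: "K \<in> borel \<rightarrow>\<^sub>M prob_algebra borel"
    and np: "\<And>p. p \<ge> 0 \<Longrightarrow> AE p' in K p. p' \<ge> 0"
  shows "p \<ge> 0 \<Longrightarrow> horizon_cost K \<gamma> 0 \<beta> d (pol K \<gamma> \<beta> d) n t p Q \<le> Vinf K \<gamma> \<beta> d t p Q"
proof (induction n arbitrary: t p Q)
  case 0 then show ?case by simp
next
  case (Suc n)
  let ?A = "ennreal (stage_cost 0 \<beta> d t p Q Q) + ennreal \<gamma> * (\<integral>\<^sup>+ p'. Vinf K \<gamma> \<beta> d (Suc t) p' {t} \<partial>K p)"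
  let ?B = "ennreal (stage_cost 0 \<beta> d t p Q {}) + ennreal \<gamma> * (\<integral>\<^sup>+ p'. Vinf K \<gamma> \<beta> d (Suc t) p' (Q \<union> {t}) \<partial>K p)"
  have b: "min ?A ?B \<le> Vinf K \<gamma> \<beta> d t p Q" by (rule bellman[OF K])
  have mono: "(\<integral>\<^sup>+ p'. horizon_cost K \<gamma> 0 \<beta> d (pol K \<gamma> \<beta> d) n (Suc t) p' R \<partial>K p)
     \<le> (\<integral>\<^sup>+ p'. Vinf K \<gamma> \<beta> d (Suc t) p' R \<partial>K p)" for R
    apply (rule nn_integral_mono_AE)
    using np[OF Suc.prems] by eventually_elim (use Suc.IH in auto)
  show ?case
  proof (cases "?A \<le> ?B")
    case True
    then have pq: "pol K \<gamma> \<beta> d t Q p = Q" by (simp add: pol_def)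
    have "horizon_cost K \<gamma> 0 \<beta> d (pol K \<gamma> \<beta> d) (Suc n) t p Q \<le> ?A"
      unfolding horizon_cost.simps pq using mono[of "{t}"]
      by (intro add_left_mono mult_left_mono) auto
    also have "?A = min ?A ?B" using True by simp
    finally show ?thesis using b by (rule order_trans)
  next
    case False
    then have pq: "pol K \<gamma> \<beta> d t Q p = {}" by (simp add: pol_def)
    have "horizon_cost K \<gamma> 0 \<beta> d (pol K \<gamma> \<beta> d) (Suc n) t p Q \<le> ?B"
      unfolding horizon_cost.simps pq using mono[of "Q \<union> {t}"]
      by (intro add_left_mono mult_left_mono) auto
    also have "?B = min ?A ?B" using False by simp
    finally show ?thesis using b by (rule order_trans)
  qed
qed

theorem lemma1:
  fixes K :: "real \<Rightarrow> real measure" and \<gamma> \<beta> p0 :: real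
    and d :: "nat \<Rightarrow> nat \<Rightarrow> real"
  assumes kernel: "K \<in> borel \<rightarrow>\<^sub>M prob_algebra borel"
    and nonneg_prices: "\<And>p. p \<ge> 0 \<Longrightarrow> AE p' in K p. p' \<ge> 0"
    and p0: "p0 \<ge> 0"
    and gamma: "0 < \<gamma>" "\<gamma> < 1"
    and beta: "\<beta> \<ge> 0"
    and delay_nonneg: "\<And>\<tau> w. d \<tau> w \<ge> 0"
  shows "\<exists>\<pi>. optimal K \<gamma> 0 \<beta> d p0 \<pi> \<and> (\<forall>t Q p. \<pi> t Q p = Q \<or> \<pi> t Q p = {})"
proof (intro exI conjI allI)
  show "pol K \<gamma> \<beta> d t Q p = Q \<or> pol K \<gamma> \<beta> d t Q p = {}" for t Q p by (simp add: pol_def)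
  show "optimal K \<gamma> 0 \<beta> d p0 (pol K \<gamma> \<beta> d)"
    unfolding optimal_def
  proof (intro conjI allI impI)
    show "admissible (pol K \<gamma> \<beta> d)" by (rule pol_adm[OF kernel])
    fix \<sigma> assume adm: "admissible \<sigma>"
    have "total_cost K \<gamma> 0 \<beta> d p0 (pol K \<gamma> \<beta> d) \<le> Vinf K \<gamma> \<beta> d 0 p0 {}"
      unfolding total_cost_def by (rule SUP_least, rule pol_upper[OF kernel nonneg_prices p0])
    also have "\<dots> \<le> total_cost K \<gamma> 0 \<beta> d p0 \<sigma>"
      unfolding total_cost_def Vinf_def
      by (rule SUP_mono', rule VV_lower[OF nonneg_prices delay_nonneg beta adm]) (use p0 in auto)
    finally show "total_cost K \<gamma> 0 \<beta> d p0 (pol K \<gamma> \<beta> d) \<le> total_cost K \<gamma> 0 \<beta> d p0 \<sigma>" .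
  qed
qed

end
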